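(* Let $u,v$ be planar rooted trees with $|u|=m$ and $|v|=n$, and write $[p]_0=\{0,1,\dots,p\}$. (1) For every hash product $u\# v$ of $u$ with $v$ and every $k\in[m+n]_0$, there exists $(i,j)\in[m]_0\times[n]_0$ and hash products $u_{[1,i]}\# v_{[1,j]}$ and $u_{[i+1,m]}\# v_{[j+1,n]}$ such that $$(u\# v)_{[1,k]}\otimes(u\# v)_{[k+1,m+n]}=(u_{[1,i]}\# v_{[1,j]})\otimes(u_{[i+1,m]}\# v_{[j+1,n]}).$$ (2) Conversely, for every $(i,j)\in[m]_0\times[n]_0$ and all hash products $u_{[1,i]}\# v_{[1,j]}$ and $u_{[i+1,m]}\# v_{[j+1,n]}$, there is a hash product $u\# v$ such that $$(u_{[1,i]}\# v_{[1,j]})\otimes(u_{[i+1,m]}\# v_{[j+1,n]})=(u\# v)_{[1,i+j]}\otimes(u\# v)_{[i+j+1,m+n]}.$$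
   Context: A tree is a finite planar rooted tree; its degree is the number of non-root nodes; $\odot$ is the one-node tree. Nodes $N(t)$ are ordered by depth-first post-order (subtrees left to right recursively, then the node; root maximal); write $u_1<\dots<u_n$ for the non-root nodes of a tree of degree $n$. For a set $A$ of non-root nodes, $t_A$ is obtained by deleting non-root nodes outside $A$ (children of a deleted node attached in order to its parent in its place); $t_{[i,j]}=t_{\{u_h,\dots,u_k\}}$ if $i\le j$ and $[i,j]\cap[n]=[h,k]\ne\emptyset$, else $t_{[i,j]}=\odot$. A partition of a tree $v$ of degree $n\ge 1$ is an ordered tuple $(v_{[n_0+1,n_1]},\dots,v_{[n_{k-1}+1,n_k]})$ with $0=n_0<\dots<n_k=n$. For a partition $P=(v_1,\dots,v_k)$ of $v$ and a tree $t$, $I(P,t)$ is the set of maps $f$ from the blocks to $N(t)$ with $f(v_1)<\dots<f(v_k)$. The hash product $t\#_{P,f}v$ is obtained from $t$ by identifying the root of each $v_i$ with $f(v_i)$, the children of the root of $v_i$ becoming children of $f(v_i)$ placed to the right of its original children. "A hash product $t\# v$" means $t\#_{P,f}v$ for some such $(P,f)$; by convention the only hash product $t\#\odot$ is $t$ (and for $t=\odot$ the hash products $\odot\# v$ equal $v$). *)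

theory Defs
  imports Main
begin

datatype tree = Node "tree list"

definition odot :: tree where "odot = Node []"

fun children :: "tree \<Rightarrow> tree list" where
  "children (Node cs) = cs"

fun tsize :: "tree \<Rightarrow> nat" where
  "tsize (Node cs) = Suc (sum_list (map tsize cs))"

definition deg :: "tree \<Rightarrow> nat" where
  "deg t = tsize t - 1"

text \<open>Nodes are numbered 1,2,... in depth-first post-order; the root of t gets
  number deg t + 1, and the non-root nodes u_1 < ... < u_n get numbers 1..n.
  The offset k is the number of nodes preceding the (sub)tree in post-order.
  restr_t A k s deletes from the subtree s (at offset k) all nodes whose number is
  not in A, attaching the children of a deleted node in order at its place;
  it returns the resulting forest.\<close>
fun restr_t :: "nat set \<Rightarrow> nat \<Rightarrow> tree \<Rightarrow> tree list"
and restr_f :: "nat set \<Rightarrow> nat \<Rightarrow> tree list \<Rightarrow> tree list" where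
  "restr_t A k (Node cs) =
     (if k + tsize (Node cs) \<in> A then [Node (restr_f A k cs)] else restr_f A k cs)"
| "restr_f A k [] = []"
| "restr_f A k (c # cs) = restr_t A k c @ restr_f A (k + tsize c) cs"

fun restrict :: "tree \<Rightarrow> nat set \<Rightarrow> tree" where
  "restrict (Node cs) A = Node (restr_f A 0 cs)"

definition tint :: "tree \<Rightarrow> nat \<Rightarrow> nat \<Rightarrow> tree" where
  "tint t i j = (if i \<le> j \<and> {i..j} \<inter> {1..deg t} \<noteq> {}
                 then restrict t ({i..j} \<inter> {1..deg t}) else odot)"

text \<open>A partition of v (degree n \<ge> 1) is given by its cut list [n_1,...,n_k]
  with 0 = n_0 < n_1 < ... < n_k = n.\<close>
definition is_cuts :: "nat \<Rightarrow> nat list \<Rightarrow> bool" where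
  "is_cuts n ns \<longleftrightarrow> ns \<noteq> [] \<and> sorted_wrt (<) (0 # ns) \<and> last ns = n"

definition blocks :: "tree \<Rightarrow> nat list \<Rightarrow> tree list" where
  "blocks v ns = map (\<lambda>l. tint v ((0 # ns) ! l + 1) (ns ! l)) [0..<length ns]"

text \<open>A map f from the k blocks to N(t) with f(v_1) < ... < f(v_k), given as the list
  of post-order numbers of the images (nodes of t are numbered 1..deg t + 1).\<close>
definition is_place :: "tree \<Rightarrow> nat \<Rightarrow> nat list \<Rightarrow> bool" where
  "is_place t k ps \<longleftrightarrow> length ps = k \<and> sorted_wrt (<) ps \<and>
     (\<forall>p\<in>set ps. 1 \<le> p \<and> p \<le> deg t + 1)"

text \<open>Grafting: g p is the forest appended (to the right of the existing children)
  as new children of the node of t numbered p (numbers refer to the original t).\<close>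
fun graft_t :: "(nat \<Rightarrow> tree list) \<Rightarrow> nat \<Rightarrow> tree \<Rightarrow> tree"
and graft_f :: "(nat \<Rightarrow> tree list) \<Rightarrow> nat \<Rightarrow> tree list \<Rightarrow> tree list" where
  "graft_t g k (Node cs) = Node (graft_f g k cs @ g (k + tsize (Node cs)))"
| "graft_f g k [] = []"
| "graft_f g k (c # cs) = graft_t g k c # graft_f g (k + tsize c) cs"

definition hash_prod :: "tree \<Rightarrow> tree \<Rightarrow> nat list \<Rightarrow> nat list \<Rightarrow> tree" where
  "hash_prod t v ns ps =
     graft_t (\<lambda>p. case map_of (zip ps (blocks v ns)) p of None \<Rightarrow> [] | Some b \<Rightarrow> children b) 0 t"

text \<open>The set of all hash products t # v (with the convention t # odot = t).\<close>
definition hashes :: "tree \<Rightarrow> tree \<Rightarrow> tree set" where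
  "hashes t v = (if deg v = 0 then {t} else
     {hash_prod t v ns ps | ns ps. is_cuts (deg v) ns \<and> is_place t (length ns) ps})"

end

theory Submission
  imports Defs
begin

abbreviation fsz :: "tree list \<Rightarrow> nat" where "fsz F \<equiv> sum_list (map tsize F)"

fun fI :: "tree list \<Rightarrow> bool" where
  "fI [] = True"
| "fI (Node ds # cs) = (fI ds \<and> fI cs)"

fun pre_f :: "nat \<Rightarrow> tree list \<Rightarrow> tree list" where
  "pre_f r [] = []"
| "pre_f r (Node ds # cs) = (if tsize (Node ds) \<le> r then Node ds # pre_f (r - tsize (Node ds)) cs else pre_f r ds)"

fun suf_f :: "nat \<Rightarrow> tree list \<Rightarrow> tree list" where
  "suf_f r [] = []"
| "suf_f r (Node ds # cs) = (if tsize (Node ds) \<le> r then suf_f (r - tsize (Node ds)) cs else Node (suf_f r ds) # cs)"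

declare pre_f.simps(2)[simp del] suf_f.simps(2)[simp del]

lemma tsize_pos: "tsize t > 0" by (cases t) auto

lemma fsz_pre: "fsz (pre_f r F) = min r (fsz F)"
  by (induction F arbitrary: r rule: fI.induct) (auto simp: pre_f.simps(2))

lemma fsz_suf: "fsz (suf_f r F) = fsz F - r"
  by (induction F arbitrary: r rule: fI.induct) (auto simp: suf_f.simps(2))

lemma pre_all: "fsz F \<le> r \<Longrightarrow> pre_f r F = F"
  by (induction F arbitrary: r rule: fI.induct) (auto simp: pre_f.simps(2))

lemma pre_0[simp]: "pre_f 0 F = []"
  by (induction F rule: fI.induct) (auto simp: pre_f.simps(2))

lemma suf_0[simp]: "suf_f 0 F = F"
  by (induction F rule: fI.induct) (auto simp: suf_f.simps(2) fsz_suf add.commute)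

lemma suf_all: "fsz F \<le> r \<Longrightarrow> suf_f r F = []"
  by (induction F arbitrary: r rule: fI.induct) (auto simp: suf_f.simps(2) fsz_suf)

lemma pre_append: "pre_f r (A @ B) = (if r \<le> fsz A then pre_f r A else A @ pre_f (r - fsz A) B)"
  by (induction A arbitrary: r rule: fI.induct) (auto simp: pre_f.simps(2) pre_all)

lemma suf_append: "suf_f r (A @ B) = suf_f r A @ suf_f (r - fsz A) B"
  by (induction A arbitrary: r rule: fI.induct) (auto simp: suf_f.simps(2) fsz_suf)

lemma pre_pre: "pre_f a (pre_f b F) = pre_f (min a b) F"
  by (induction F arbitrary: a b rule: fI.induct) (auto simp: pre_f.simps(2) min_def)

lemma suf_suf: "suf_f a (suf_f b F) = suf_f (b + a) F"
  by (induction F arbitrary: a b rule: fI.induct) (auto simp: suf_f.simps(2) fsz_suf add.commute)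

lemma pre_suf: "pre_f r (suf_f a F) = suf_f a (pre_f (a + r) F)"
  by (induction F arbitrary: a r rule: fI.induct) (auto simp: suf_f.simps(2) pre_f.simps(2) fsz_suf add.commute)


lemma RI: "(\<forall>x. o' < x \<and> x \<le> o' + fsz F \<longrightarrow> (x \<in> A \<longleftrightarrow> o' + a < x \<and> x \<le> o' + b))
   \<Longrightarrow> restr_f A o' F = suf_f a (pre_f b F)"
proof (induction F arbitrary: o' a b rule: fI.induct)
  case 1 then show ?case by simp
next
  case (2 ds cs)
  define T where "T = tsize (Node ds)"
  have T: "T = Suc (fsz ds)" by (simp add: T_def)
  have hds: "restr_f A o' ds = suf_f a (pre_f b ds)"
    using 2(3) by (intro 2(1)) (auto simp: T)
  have hcs: "restr_f A (o' + T) cs = suf_f (a - T) (pre_f (b - T) cs)"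
    using 2(3) by (intro 2(2)) (auto simp: T)
  have root: "o' + T \<in> A \<longleftrightarrow> a < T \<and> T \<le> b"
    using 2(3)[rule_format, of "o' + T"] by (auto simp: T)
  have "restr_f A o' (Node ds # cs) = (if o'+T \<in> A then [Node (suf_f a (pre_f b ds))] else suf_f a (pre_f b ds))
          @ suf_f (a - T) (pre_f (b - T) cs)"
    using hds hcs by (simp add: T_def)
  also have "\<dots> = suf_f a (pre_f b (Node ds # cs))"
  proof (cases "T \<le> b")
    case True
    then have pb: "pre_f b ds = ds" by (intro pre_all) (simp add: T)
    show ?thesis
    proof (cases "T \<le> a")
      case True
      then show ?thesis using \<open>T \<le> b\<close> root pb by (simp add: pre_f.simps(2) suf_f.simps(2) T_def[symmetric] suf_all T)
    next
      case False
      then show ?thesis using \<open>T \<le> b\<close> root pb by (simp add: pre_f.simps(2) suf_f.simps(2) T_def[symmetric] T)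
    qed
  next
    case False
    then show ?thesis using root by (simp add: pre_f.simps(2) T_def[symmetric] T)
  qed
  finally show ?case .
qed

lemma deg_Node[simp]: "deg (Node F) = fsz F" by (simp add: deg_def)

lemma tint_eq: assumes "1 \<le> a" "b \<le> deg t"
  shows "tint t a b = Node (suf_f (a - 1) (pre_f b (children t)))"
proof (cases t)
  case (Node cs)
  show ?thesis
  proof (cases "a \<le> b")
    case True
    then have ne: "{a..b} \<inter> {1..deg t} \<noteq> {}" using assms by auto
    have "restr_f ({a..b} \<inter> {1..deg t}) 0 cs = suf_f (a - 1) (pre_f b cs)"
      by (rule RI) (use assms Node in auto)
    then show ?thesis using True ne Node by (simp add: tint_def)
  next
    case False
    then have "suf_f (a - 1) (pre_f b cs) = []" by (intro suf_all) (simp add: fsz_pre)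
    then show ?thesis using False Node by (simp add: tint_def odot_def)
  qed
qed

fun gs :: "(nat \<Rightarrow> tree list) \<Rightarrow> nat \<Rightarrow> nat \<Rightarrow> nat" where
  "gs g k 0 = 0"
| "gs g k (Suc n) = gs g k n + fsz (g (k + Suc n))"

lemma gs_add: "gs g k (a + b) = gs g k a + gs g (k + a) b"
  by (induction b) (auto simp: add.assoc)

lemma gs_mono: "a \<le> b \<Longrightarrow> gs g k a \<le> gs g k b"
  using gs_add[of g k a "b - a"] by simp

lemma size_graft:
  "tsize (graft_t g k t) = tsize t + gs g k (tsize t)"
  "fsz (graft_f g k F) = fsz F + gs g k (fsz F)"
  by (induction g k t and g k F rule: graft_t_graft_f.induct) (auto simp: gs_add)

lemma graft_cong:
  "(\<forall>p. k < p \<and> p \<le> k + tsize t \<longrightarrow> g p = g' p) \<Longrightarrow> graft_t g k t = graft_t g' k t"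
  "(\<forall>p. k < p \<and> p \<le> k + fsz F \<longrightarrow> g p = g' p) \<Longrightarrow> graft_f g k F = graft_f g' k F"
  by (induction g k t and g k F rule: graft_t_graft_f.induct) auto

lemma graft_shift:
  "graft_t g (k + d) t = graft_t (\<lambda>p. g (p + d)) k t"
  "graft_f g (k + d) F = graft_f (\<lambda>p. g (p + d)) k F"
  by (induction g k t and g k F arbitrary: and rule: graft_t_graft_f.induct)
     (auto simp: ac_simps)

lemma graft_nil:
  "graft_t (\<lambda>_. []) k t = t"
  "graft_f (\<lambda>_. []) k F = F"
  by (induction "\<lambda>_::nat. [] :: tree list" k t and "\<lambda>_::nat. [] :: tree list" k F rule: graft_t_graft_f.induct) auto


lemma graft_Node: "graft_f g k (Node ds # cs) =
   Node (graft_f g k ds @ g (k + Suc (fsz ds))) # graft_f g (k + Suc (fsz ds)) cs"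
  by simp

lemma pre_cons_add: "pre_f (tsize c + R) (c # cs) = c # pre_f R cs"
  by (cases c) (simp add: pre_f.simps(2))
lemma suf_cons_add: "suf_f (tsize c + R) (c # cs) = suf_f R cs"
  by (cases c) (simp add: suf_f.simps(2))
lemma pre_cons_lt: "r < tsize (Node ds) \<Longrightarrow> pre_f r (Node ds # cs) = pre_f r ds"
  by (simp add: pre_f.simps(2))
lemma suf_cons_lt: "r < tsize (Node ds) \<Longrightarrow> suf_f r (Node ds # cs) = Node (suf_f r ds) # cs"
  by (simp add: suf_f.simps(2))

lemma PL: "i < fsz F \<Longrightarrow> s \<le> fsz (g (k + i + 1)) \<Longrightarrow>
  pre_f (i + gs g k i + s) (graft_f g k F) = graft_f g k (pre_f i F) @ pre_f s (g (k + i + 1))"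
proof (induction F arbitrary: k i s rule: fI.induct)
  case 1 then show ?case by simp
next
  case (2 ds cs)
  define T where "T = Suc (fsz ds)"
  define X where "X = graft_f g k ds @ g (k + T)"
  have GT: "tsize (Node X) = T + gs g k T"
    by (simp add: X_def size_graft T_def)
  have eq: "graft_f g k (Node ds # cs) = Node X # graft_f g (k + T) cs"
    by (simp add: X_def T_def)
  show ?case
  proof (cases "T \<le> i")
    case True
    have r: "i + gs g k i + s = tsize (Node X) + ((i - T) + gs g (k + T) (i - T) + s)"
      using gs_add[of g k T "i - T"] True GT by simp
    have ih: "pre_f ((i - T) + gs g (k + T) (i - T) + s) (graft_f g (k + T) cs)
       = graft_f g (k + T) (pre_f (i - T) cs) @ pre_f s (g (k + T + (i - T) + 1))"
      using 2(3,4) True by (intro 2(2)) (auto simp: T_def)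
    have "pre_f i (Node ds # cs) = Node ds # pre_f (i - T) cs"
      using True pre_cons_add[of "Node ds" "i - T" cs] by (simp add: T_def)
    then show ?thesis using ih True unfolding eq r pre_cons_add
      by (simp add: T_def X_def)
  next
    case False
    have lt: "i + gs g k i + s < tsize (Node X)"
    proof -
      have "s \<le> fsz (g (k + Suc i))" using 2(4) by simp
      then have "i + gs g k i + s \<le> i + gs g k (Suc i)" by simp
      also have "\<dots> \<le> i + gs g k T" using False by (intro add_left_mono gs_mono) simp
      finally show ?thesis using False GT by simp
    qed
    then have e1: "pre_f (i + gs g k i + s) (graft_f g k (Node ds # cs)) = pre_f (i + gs g k i + s) X"
      unfolding eq by (rule pre_cons_lt)
    have e2: "pre_f i (Node ds # cs) = pre_f i ds" using False by (simp add: pre_f.simps(2) T_def)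
    show ?thesis
    proof (cases "i < fsz ds")
      case True
      have le: "i + gs g k i + s \<le> fsz (graft_f g k ds)"
      proof -
        have "i + gs g k i + s \<le> i + gs g k (Suc i)" using 2(4) by simp
        also have "\<dots> \<le> fsz ds + gs g k (fsz ds)" using True by (intro add_mono gs_mono) auto
        finally show ?thesis by (simp add: size_graft)
      qed
      show ?thesis unfolding e1 e2 X_def pre_append using le 2(1)[OF True 2(4)] by simp
    next
      case False2: False
      then have ii: "i = fsz ds" using False T_def by simp
      have "pre_f i ds = ds" by (intro pre_all) (simp add: ii)
      then show ?thesis unfolding e1 e2 X_def pre_append
        by (simp add: size_graft ii T_def pre_all)
    qed
  qed
qed

lemma SL: "i < fsz F \<Longrightarrow> s \<le> fsz (g (k + i + 1)) \<Longrightarrow>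
  suf_f (i + gs g k i + s) (graft_f g k F) =
    graft_f (g(k + i + 1 := suf_f s (g (k + i + 1)))) (k + i) (suf_f i F)"
proof (induction F arbitrary: k i s rule: fI.induct)
  case 1 then show ?case by simp
next
  case (2 ds cs)
  define T where "T = Suc (fsz ds)"
  define X where "X = graft_f g k ds @ g (k + T)"
  define g' where "g' = g(k + i + 1 := suf_f s (g (k + i + 1)))"
  have GT: "tsize (Node X) = T + gs g k T"
    by (simp add: X_def size_graft T_def)
  have eq: "graft_f g k (Node ds # cs) = Node X # graft_f g (k + T) cs"
    by (simp add: X_def T_def)
  show ?case
  proof (cases "T \<le> i")
    case True
    have r: "i + gs g k i + s = tsize (Node X) + ((i - T) + gs g (k + T) (i - T) + s)"
      using gs_add[of g k T "i - T"] True GT by simp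
    have kk: "k + T + (i - T) = k + i" using True by simp
    have ih: "suf_f ((i - T) + gs g (k + T) (i - T) + s) (graft_f g (k + T) cs)
       = graft_f (g(k + i + 1 := suf_f s (g (k + i + 1)))) (k + i) (suf_f (i - T) cs)"
    proof -
      have c1: "i - T < fsz cs" using 2(3) True by (simp add: T_def)
      have c2: "s \<le> fsz (g (k + T + (i - T) + 1))" using 2(4) kk by simp
      show ?thesis using 2(2)[OF c1 c2] unfolding kk .
    qed
    have "suf_f i (Node ds # cs) = suf_f (i - T) cs"
      using True suf_cons_add[of "Node ds" "i - T" cs] by (simp add: T_def)
    then show ?thesis using ih True unfolding eq r suf_cons_add
      by (simp add: T_def fun_upd_def)
  next
    case False
    have lt: "i + gs g k i + s < tsize (Node X)"
    proof -
      have "s \<le> fsz (g (k + Suc i))" using 2(4) by simp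
      then have "i + gs g k i + s \<le> i + gs g k (Suc i)" by simp
      also have "\<dots> \<le> i + gs g k T" using False by (intro add_left_mono gs_mono) simp
      finally show ?thesis using False GT by simp
    qed
    then have e1: "suf_f (i + gs g k i + s) (graft_f g k (Node ds # cs)) =
        Node (suf_f (i + gs g k i + s) X) # graft_f g (k + T) cs"
      unfolding eq by (rule suf_cons_lt)
    have e2: "suf_f i (Node ds # cs) = Node (suf_f i ds) # cs" using False by (simp add: suf_f.simps(2) T_def)
    have tsz: "k + i + tsize (Node (suf_f i ds)) = k + T" using False by (simp add: fsz_suf T_def)
    have rest: "graft_f g' (k + T) cs = graft_f g (k + T) cs"
      by (rule graft_cong) (use False in \<open>auto simp: g'_def\<close>)
    have e3: "graft_f g' (k + i) (suf_f i (Node ds # cs)) =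
        Node (graft_f g' (k + i) (suf_f i ds) @ g' (k + T)) # graft_f g (k + T) cs"
    proof -
      have h: "Suc (k + i + fsz (suf_f i ds)) = k + T" using tsz by simp
      have "graft_f g' (k + i) (Node (suf_f i ds) # cs) = Node (graft_f g' (k + i) (suf_f i ds) @ g' (Suc (k + i + fsz (suf_f i ds)))) # graft_f g' (Suc (k + i + fsz (suf_f i ds))) cs"
        by simp
      then show ?thesis unfolding e2 h rest .
    qed
    show ?thesis
    proof (cases "i < fsz ds")
      case True
      have le: "i + gs g k i + s \<le> fsz (graft_f g k ds)"
      proof -
        have "i + gs g k i + s \<le> i + gs g k (Suc i)" using 2(4) by simp
        also have "\<dots> \<le> fsz ds + gs g k (fsz ds)" using True by (intro add_mono gs_mono) auto
        finally show ?thesis by (simp add: size_graft)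
      qed
      have gT: "g' (k + T) = g (k + T)" using True by (simp add: g'_def T_def)
      show ?thesis unfolding e1 e3[unfolded g'_def] X_def suf_append using le 2(1)[OF True 2(4)] gT[unfolded g'_def]
        by (simp add: fun_upd_def)
    next
      case False2: False
      then have ii: "i = fsz ds" using False T_def by simp
      have s0: "suf_f i ds = []" by (intro suf_all) (simp add: ii)
      have sz: "suf_f (i + gs g k i + s) (graft_f g k ds) = []" by (intro suf_all) (simp add: size_graft ii)
      show ?thesis unfolding e1 e3[unfolded g'_def] X_def suf_append s0 sz
        by (simp add: size_graft ii T_def)
    qed
  qed
qed


definition gC :: "(nat \<Rightarrow> nat) \<Rightarrow> tree list \<Rightarrow> nat \<Rightarrow> tree list" where
  "gC C V p = suf_f (C (p - 1)) (pre_f (C p) V)"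

definition validC :: "nat \<Rightarrow> nat \<Rightarrow> (nat \<Rightarrow> nat) \<Rightarrow> bool" where
  "validC m n C \<longleftrightarrow> C 0 = 0 \<and> C (Suc m) = n \<and> (\<forall>p\<le>m. C p \<le> C (Suc p))"

lemma valid_mono: assumes "validC m n C" "p \<le> q" "q \<le> Suc m" shows "C p \<le> C q"
  using assms(2,3)
proof (induction q)
  case 0 then show ?case by simp
next
  case (Suc q)
  show ?case
  proof (cases "p = Suc q")
    case False
    then have "C p \<le> C q" using Suc by simp
    also have "C q \<le> C (Suc q)" using assms(1) Suc(3) by (simp add: validC_def)
    finally show ?thesis .
  qed simp
qed

lemma valid_le: "validC m n C \<Longrightarrow> p \<le> Suc m \<Longrightarrow> C p \<le> n"
  using valid_mono[of m n C p "Suc m"] by (simp add: validC_def)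

lemma fsz_gC: "C (p - 1) \<le> C p \<Longrightarrow> C p \<le> fsz V \<Longrightarrow> fsz (gC C V p) = C p - C (p - 1)"
  by (simp add: gC_def fsz_suf fsz_pre)

lemma gs_gC: assumes "validC m n C" "n \<le> fsz V" shows "q \<le> Suc m \<Longrightarrow> gs (gC C V) 0 q = C q"
proof (induction q)
  case 0 then show ?case using assms by (simp add: validC_def)
next
  case (Suc q)
  have a: "C q \<le> C (Suc q)" using valid_mono[OF assms(1)] Suc(2) by simp
  have b: "C (Suc q) \<le> fsz V" using valid_le[OF assms(1) Suc(2)] assms(2) by simp
  show ?case using Suc fsz_gC[of C "Suc q" V] a b by simp
qed

lemma KL:
  assumes val: "validC m n C" and U: "fsz U = m" and V: "fsz V = n"
    and i: "i \<le> m" and s: "s \<le> C (Suc i) - C i" and j: "j = C i + s"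
    and w: "w = graft_t (gC C V) 0 (Node U)"
  shows "tint w 1 (i + j) = graft_t (gC (\<lambda>p. if p \<le> i then C p else j) (pre_f j V)) 0 (Node (pre_f i U))"
    and "tint w (i + j + 1) (m + n) = graft_t (gC (\<lambda>p. if p = 0 then 0 else C (p + i) - j) (suf_f j V)) 0 (Node (suf_f i U))"
proof -
  define g where "g = gC C V"
  define W where "W = graft_f g 0 U @ g (Suc m)"
  have wW: "w = Node W" using w U by (simp add: W_def g_def)
  have Ci: "C i \<le> C (Suc i)" using valid_mono[OF val, of i "Suc i"] i by simp
  have CSi: "C (Suc i) \<le> n" using valid_le[OF val, of "Suc i"] i by simp
  have jle: "j \<le> C (Suc i)" using j s Ci by simp
  have gs_i: "gs g 0 i = C i" using gs_gC[OF val, of V i] V i by (simp add: g_def)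
  have fW: "fsz W = m + n"
  proof -
    have "tsize w = Suc m + gs g 0 (Suc m)" using size_graft(1)[of g 0 "Node U"] w U by (simp add: g_def)
    also have "gs g 0 (Suc m) = n" using gs_gC[OF val, of V "Suc m"] V val by (simp add: g_def validC_def)
    finally show ?thesis using wW by simp
  qed
  have fg: "fsz (g (0 + i + 1)) = C (Suc i) - C i"
    using fsz_gC[of C "Suc i" V] Ci CSi V by (simp add: g_def)
  have sle: "s \<le> fsz (g (0 + i + 1))" using fg s by simp
  have ilt: "i < fsz [Node U]" using U i by simp
  have r: "i + gs g 0 i + s = i + j" using gs_i j by simp
  have rlt: "i + j < tsize (Node W)" using fW i jle CSi by simp
  have gw: "graft_f g 0 [Node U] = [Node W]" using wW w by (simp add: g_def)
  have P: "pre_f (i + j) W = graft_f g 0 (pre_f i U) @ pre_f s (g (Suc i))"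
  proof -
    have "pre_f (i + j) [Node W] = graft_f g 0 (pre_f i [Node U]) @ pre_f s (g (Suc i))"
      using PL[of i "[Node U]" s g 0, OF ilt sle] unfolding r gw by simp
    moreover have "pre_f (i + j) [Node W] = pre_f (i + j) W" by (rule pre_cons_lt[OF rlt])
    moreover have "pre_f i [Node U] = pre_f i U" by (rule pre_cons_lt) (use U i in simp)
    ultimately show ?thesis by simp
  qed
  define C1 where "C1 = (\<lambda>p. if p \<le> i then C p else j)"
  have t1: "tint w 1 (i + j) = Node (pre_f (i + j) W)"
    using tint_eq[of 1 "i + j" w] wW fW i jle CSi by simp
  have rhs1: "graft_t (gC C1 (pre_f j V)) 0 (Node (pre_f i U)) =
       Node (graft_f (gC C1 (pre_f j V)) 0 (pre_f i U) @ gC C1 (pre_f j V) (Suc i))"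
    using U i by (simp add: fsz_pre)
  have last1: "gC C1 (pre_f j V) (Suc i) = pre_f s (g (Suc i))"
    by (simp add: gC_def C1_def g_def pre_pre pre_suf j min_def jle[unfolded j])
  have cong1: "graft_f (gC C1 (pre_f j V)) 0 (pre_f i U) = graft_f g 0 (pre_f i U)"
  proof (rule graft_cong(2), intro allI impI)
    fix p assume p: "0 < p \<and> p \<le> 0 + fsz (pre_f i U)"
    then have pi: "p \<le> i" using U i by (simp add: fsz_pre)
    have "C p \<le> C i" using valid_mono[OF val pi] i by simp
    then have "C p \<le> j" using j by simp
    moreover have "p - 1 \<le> i" using pi by simp
    ultimately show "gC C1 (pre_f j V) p = g p" using pi by (simp add: gC_def C1_def g_def pre_pre min_def)
  qed
  show "tint w 1 (i + j) = graft_t (gC (\<lambda>p. if p \<le> i then C p else j) (pre_f j V)) 0 (Node (pre_f i U))"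
    unfolding C1_def[symmetric] t1 rhs1 last1 cong1 P ..
  define g' where "g' = g(0 + i + 1 := suf_f s (g (0 + i + 1)))"
  define X where "X = suf_f i U"
  define C2 where "C2 = (\<lambda>p. if p = 0 then 0 else C (p + i) - j)"
  have t2: "tint w (i + j + 1) (m + n) = Node (suf_f (i + j) W)"
    using tint_eq[of "i + j + 1" "m + n" w] wW fW by (simp add: pre_all)
  have S: "Node (suf_f (i + j) W) = graft_t g' i (Node X)"
  proof -
    have "suf_f (i + j) [Node W] = graft_f g' (0 + i) (suf_f i [Node U])"
      using SL[of i "[Node U]" s g 0, OF ilt sle] unfolding r gw g'_def by simp
    moreover have "suf_f (i + j) [Node W] = [Node (suf_f (i + j) W)]" by (rule suf_cons_lt[OF rlt])
    moreover have "suf_f i [Node U] = [Node X]" unfolding X_def by (rule suf_cons_lt) (use U i in simp)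
    ultimately show ?thesis by simp
  qed
  have sh: "graft_t g' i (Node X) = graft_t (\<lambda>p. g' (p + i)) 0 (Node X)"
    using graft_shift(1)[of g' 0 i "Node X"] by simp
  have cong2: "graft_t (\<lambda>p. g' (p + i)) 0 (Node X) = graft_t (gC C2 (suf_f j V)) 0 (Node X)"
  proof (rule graft_cong(1), intro allI impI)
    fix p assume p: "0 < p \<and> p \<le> 0 + tsize (Node X)"
    then have pm: "p + i \<le> Suc m" using U i by (auto simp: X_def fsz_suf)
    show "g' (p + i) = gC C2 (suf_f j V) p"
    proof (cases "p = 1")
      case True
      have "g' (p + i) = suf_f j (pre_f (C (Suc i)) V)"
        using True by (simp add: g'_def g_def gC_def suf_suf j add.commute)
      also have "\<dots> = gC C2 (suf_f j V) p"
        using True jle by (simp add: gC_def C2_def pre_suf)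
      finally show ?thesis .
    next
      case False
      then have p2: "p \<ge> 2" using p by simp
      have "C (Suc i) \<le> C (p - 1 + i)" by (rule valid_mono[OF val]) (use pm p2 in auto)
      then have jl: "j \<le> C (p - 1 + i)" using jle by simp
      have jl2: "C (p - 1 + i) \<le> C (p + i)" using valid_mono[OF val, of "p - 1 + i" "p + i"] pm by simp
      have e: "p + i - 1 = p - 1 + i" using p2 by simp
      have "g' (p + i) = suf_f (C (p - 1 + i)) (pre_f (C (p + i)) V)"
        using p2 by (simp add: g'_def g_def gC_def e)
      also have "\<dots> = gC C2 (suf_f j V) p"
        using p2 jl jl2 by (simp add: gC_def C2_def pre_suf suf_suf)
      finally show ?thesis .
    qed
  qed
  show "tint w (i + j + 1) (m + n) = graft_t (gC (\<lambda>p. if p = 0 then 0 else C (p + i) - j) (suf_f j V)) 0 (Node (suf_f i U))"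
    unfolding C2_def[symmetric] X_def[symmetric] t2 S sh cong2 ..
qed


lemma filt_le_nth: "sorted_wrt (<) (xs :: nat list) \<Longrightarrow> l < length xs \<Longrightarrow>
   filter (\<lambda>x. x \<le> xs ! l) xs = take (Suc l) xs"
proof (induction xs arbitrary: l)
  case Nil then show ?case by simp
next
  case (Cons x xs)
  show ?case
  proof (cases l)
    case 0
    have "filter (\<lambda>y. y \<le> x) xs = []" "filter (\<lambda>y. y < x) xs = []"
      using Cons.prems by (auto simp: filter_empty_conv not_le not_less less_imp_le)
    then show ?thesis using 0 by simp
  next
    case (Suc l')
    then have "xs ! l' \<in> set xs" using Cons.prems by simp
    then have "x < xs ! l'" using Cons.prems by simp
    then show ?thesis using Cons Suc by (simp add: less_imp_le)
  qed
qed

lemma filt_lt_nth: "sorted_wrt (<) (xs :: nat list) \<Longrightarrow> l < length xs \<Longrightarrow>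
   filter (\<lambda>x. x < xs ! l) xs = take l xs"
proof (induction xs arbitrary: l)
  case Nil then show ?case by simp
next
  case (Cons x xs)
  show ?case
  proof (cases l)
    case 0
    have "filter (\<lambda>y. y \<le> x) xs = []" "filter (\<lambda>y. y < x) xs = []"
      using Cons.prems by (auto simp: filter_empty_conv not_le not_less less_imp_le)
    then show ?thesis using 0 by simp
  next
    case (Suc l')
    then have "xs ! l' \<in> set xs" using Cons.prems by simp
    then have "x < xs ! l'" using Cons.prems by simp
    then show ?thesis using Cons Suc by (simp add: less_imp_le)
  qed
qed

lemma sorted_le_last: "sorted_wrt (<) (xs :: nat list) \<Longrightarrow> x \<in> set xs \<Longrightarrow> x \<le> last xs"
proof (induction xs)
  case Nil then show ?case by simp
next
  case (Cons a xs)
  show ?case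
  proof (cases "xs = []")
    case True then show ?thesis using Cons by simp
  next
    case False
    have "a < last xs" using Cons.prems False last_in_set[OF False] by simp
    then show ?thesis using Cons False by (auto simp: less_imp_le)
  qed
qed

lemma length_filter_mono': "(\<And>x. P x \<Longrightarrow> Q x) \<Longrightarrow> length (filter P xs) \<le> length (filter Q xs)"
  by (induction xs) auto

lemma gC_cong: "tsize t = Suc m \<Longrightarrow> (\<forall>p \<le> Suc m. C p = C' p) \<Longrightarrow>
   graft_t (gC C V) 0 t = graft_t (gC C' V) 0 t"
  by (rule graft_cong(1)) (auto simp: gC_def)

lemma tsize_deg: "tsize t = Suc (deg t)"
  using tsize_pos[of t] by (simp add: deg_def)

lemma graft_empty: "(\<forall>p. 0 < p \<and> p \<le> tsize t \<longrightarrow> g p = []) \<Longrightarrow> graft_t g 0 t = t"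
  using graft_cong(1)[of 0 t g "\<lambda>_. []"] graft_nil(1) by simp

lemma H1:
  assumes cuts: "is_cuts (deg v) ns" and pl: "is_place t (length ns) ps"
  defines "Cn \<equiv> \<lambda>p. (0 # ns) ! length (filter (\<lambda>x. x \<le> p) ps)"
  shows "validC (deg t) (deg v) Cn \<and> hash_prod t v ns ps = graft_t (gC Cn (children v)) 0 t"
proof -
  obtain V where vV: "v = Node V" by (cases v)
  have n: "deg v = fsz V" using vV by simp
  have ne: "ns \<noteq> []" and srt: "sorted_wrt (<) (0 # ns)" and lst: "last ns = deg v"
    using cuts by (auto simp: is_cuts_def)
  have len: "length ps = length ns" and sps: "sorted_wrt (<) ps"
    and rng: "\<forall>p\<in>set ps. 1 \<le> p \<and> p \<le> deg t + 1"
    using pl by (auto simp: is_place_def)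
  have dps: "distinct ps" using sps strict_sorted_iff by blast
  have sorted0: "sorted (0 # ns)" using srt strict_sorted_iff by blast
  have nsle: "\<forall>x\<in>set ns. x \<le> deg v"
    using sorted_le_last[of ns] srt lst by auto
  have mono: "\<And>p q. p \<le> q \<Longrightarrow> Cn p \<le> Cn q"
  proof -
    fix p q :: nat assume "p \<le> q"
    then have "length (filter (\<lambda>x. x \<le> p) ps) \<le> length (filter (\<lambda>x. x \<le> q) ps)"
      by (intro length_filter_mono') auto
    moreover have "length (filter (\<lambda>x. x \<le> q) ps) < length (0 # ns)"
      using length_filter_le[of _ ps] len by (simp add: le_imp_less_Suc)
    ultimately show "Cn p \<le> Cn q" unfolding Cn_def by (intro sorted_nth_mono[OF sorted0]) auto
  qed
  have C0: "Cn 0 = 0"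
  proof -
    have "filter (\<lambda>x. x \<le> 0) ps = []" using rng by (auto intro!: filter_False)
    then show ?thesis by (simp add: Cn_def)
  qed
  have Cm: "Cn (Suc (deg t)) = deg v"
  proof -
    have "filter (\<lambda>x. x \<le> Suc (deg t)) ps = ps" using rng by (auto intro!: filter_True)
    then have "Cn (Suc (deg t)) = (0 # ns) ! length ns" by (simp add: Cn_def len)
    also have "\<dots> = last ns" using ne by (cases ns rule: rev_cases) auto
    finally show ?thesis using lst by simp
  qed
  have valid: "validC (deg t) (deg v) Cn" using C0 Cm mono by (simp add: validC_def)
  have "hash_prod t v ns ps = graft_t (gC Cn V) 0 t"
    unfolding hash_prod_def
  proof (rule graft_cong(1), intro allI impI)
    fix p assume p: "0 < p \<and> p \<le> 0 + tsize t"
    show "(case map_of (zip ps (blocks v ns)) p of None \<Rightarrow> [] | Some b \<Rightarrow> children b) = gC Cn V p"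
    proof (cases "p \<in> set ps")
      case True
      then obtain l where l: "l < length ps" "ps ! l = p" by (auto simp: in_set_conv_nth)
      have lb: "length (blocks v ns) = length ns" by (simp add: blocks_def)
      have mo: "map_of (zip ps (blocks v ns)) p = Some (blocks v ns ! l)"
        using map_of_zip_nth[of ps "blocks v ns" l] l lb len dps by simp
      have bl: "blocks v ns ! l = tint v ((0 # ns) ! l + 1) (ns ! l)"
        using l len by (simp add: blocks_def)
      have nl: "ns ! l \<le> deg v" using nsle l len by simp
      have tv: "tint v ((0 # ns) ! l + 1) (ns ! l) = Node (suf_f ((0 # ns) ! l) (pre_f (ns ! l) V))"
        using tint_eq[of "(0 # ns) ! l + 1" "ns ! l" v] nl vV by simp
      have c1: "Cn p = ns ! l"
        using filt_le_nth[OF sps l(1)] l by (simp add: Cn_def)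
      have p1: "p \<ge> 1" using rng True by auto
      have "filter (\<lambda>x. x \<le> p - 1) ps = filter (\<lambda>x. x < p) ps"
        using p1 by (intro filter_cong) auto
      then have c2: "Cn (p - 1) = (0 # ns) ! l"
        using filt_lt_nth[OF sps l(1)] l by (simp add: Cn_def)
      show ?thesis using mo bl tv c1 c2 by (simp add: gC_def)
    next
      case False
      have "p \<notin> fst ` set (zip ps (blocks v ns))" using False by (auto dest: set_zip_leftD)
      then have mo: "map_of (zip ps (blocks v ns)) p = None" by (simp add: map_of_eq_None_iff)
      have "filter (\<lambda>x. x \<le> p - 1) ps = filter (\<lambda>x. x \<le> p) ps"
      proof (rule filter_cong)
        fix x assume "x \<in> set ps"
        then have "x \<noteq> p" using False by auto
        then show "(x \<le> p - 1) = (x \<le> p)" by auto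
      qed simp
      then have "Cn (p - 1) = Cn p" by (simp add: Cn_def)
      then have "gC Cn V p = []" by (simp add: gC_def suf_all fsz_pre)
      then show ?thesis using mo by simp
    qed
  qed
  then show ?thesis using valid vV by simp
qed

lemma H2:
  assumes val: "validC m n C" and n1: "n \<ge> 1"
  defines "ps \<equiv> filter (\<lambda>q. C (q - 1) < C q) [1..<Suc (Suc m)]"
  shows "is_cuts n (map C ps) \<and> (\<forall>p\<in>set ps. 1 \<le> p \<and> p \<le> Suc m) \<and> sorted_wrt (<) ps \<and>
     (\<forall>p \<le> Suc m. (0 # map C ps) ! length (filter (\<lambda>x. x \<le> p) ps) = C p)"
proof -
  define P where "P q = filter (\<lambda>q. C (q - 1) < C q) [1..<Suc q]" for q
  have Pq: "q \<le> Suc m \<Longrightarrow> last (0 # map C (P q)) = C q \<and> sorted_wrt (<) (0 # map C (P q))" for q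
  proof (induction q)
    case 0 then show ?case using val by (simp add: P_def validC_def)
  next
    case (Suc q)
    have IH: "last (0 # map C (P q)) = C q" "sorted_wrt (<) (0 # map C (P q))" using Suc by auto
    have up: "[1..<Suc (Suc q)] = [1..<Suc q] @ [Suc q]" by simp
    have mq: "C q \<le> C (Suc q)" using valid_mono[OF val, of q "Suc q"] Suc(2) by simp
    show ?case
    proof (cases "C q < C (Suc q)")
      case True
      then have e: "P (Suc q) = P q @ [Suc q]" unfolding P_def up by simp
      have "\<forall>x\<in>set (0 # map C (P q)). x < C (Suc q)"
        using sorted_le_last[OF IH(2)] IH(1) True by fastforce
      then show ?thesis using IH e by (simp add: sorted_wrt_append)
    next
      case False
      then have e: "P (Suc q) = P q" unfolding P_def up by simp
      have "C (Suc q) = C q" using False mq by simp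
      then show ?thesis using IH e by simp
    qed
  qed
  have psP: "ps = P (Suc m)" by (simp add: ps_def P_def)
  have split: "p \<le> Suc m \<Longrightarrow> ps = P p @ filter (\<lambda>q. C (q - 1) < C q) [Suc p..<Suc (Suc m)]" for p
  proof -
    assume "p \<le> Suc m"
    then have "[1..<Suc (Suc m)] = [1..<Suc p] @ [Suc p..<Suc (Suc m)]"
      using upt_add_eq_append[of 1 "Suc p" "Suc (Suc m) - Suc p"] by simp
    then show ?thesis by (simp add: ps_def P_def)
  qed
  have key: "\<forall>p \<le> Suc m. (0 # map C ps) ! length (filter (\<lambda>x. x \<le> p) ps) = C p"
  proof (intro allI impI)
    fix p assume p: "p \<le> Suc m"
    define R where "R = filter (\<lambda>q. C (q - 1) < C q) [Suc p..<Suc (Suc m)]"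
    have ps: "ps = P p @ R" using split[OF p] by (simp add: R_def)
    have f1: "filter (\<lambda>x. x \<le> p) (P p) = P p"
      unfolding P_def by (rule filter_True) auto
    have f2: "filter (\<lambda>x. x \<le> p) R = []"
      unfolding R_def by (rule filter_False) auto
    have f: "filter (\<lambda>x. x \<le> p) ps = P p"
      unfolding ps using f1 f2 by simp
    have "(0 # map C ps) ! length (P p) = ((0 # map C (P p)) @ map C R) ! length (P p)"
      unfolding ps by simp
    also have "\<dots> = (0 # map C (P p)) ! length (P p)" by (simp add: nth_append nth_Cons')
    also have "\<dots> = last (0 # map C (P p))" by (simp add: last_conv_nth)
    also have "\<dots> = C p" using Pq[OF p] by simp
    finally show "(0 # map C ps) ! length (filter (\<lambda>x. x \<le> p) ps) = C p" using f by simp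
  qed
  have lastn: "last (0 # map C ps) = n" using Pq[of "Suc m"] psP val by (simp add: validC_def)
  have srt: "sorted_wrt (<) (0 # map C ps)" using Pq[of "Suc m"] psP by simp
  have nne: "ps \<noteq> []" using lastn n1 by auto
  have cuts: "is_cuts n (map C ps)" using nne lastn srt by (simp add: is_cuts_def)
  have sps: "sorted_wrt (<) ps" unfolding ps_def by (intro sorted_wrt_filter sorted_wrt_upt)
  have rng: "\<forall>p\<in>set ps. 1 \<le> p \<and> p \<le> Suc m" by (auto simp: ps_def)
  show ?thesis using cuts sps rng key by simp
qed

lemma hashes_in: assumes "validC (deg t) (deg v) C"
  shows "graft_t (gC C (children v)) 0 t \<in> hashes t v"
proof (cases "deg v = 0")
  case True
  have "graft_t (gC C (children v)) 0 t = t"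
  proof (rule graft_empty, intro allI impI)
    fix p assume p: "0 < p \<and> p \<le> tsize t"
    have "C p \<le> 0" "C (p - 1) \<le> 0" using valid_le[OF assms, of p] valid_le[OF assms, of "p - 1"] p True
      by (auto simp: tsize_deg)
    then show "gC C (children v) p = []" by (simp add: gC_def)
  qed
  then show ?thesis using True by (simp add: hashes_def)
next
  case False
  define ps where "ps = filter (\<lambda>q. C (q - 1) < C q) [1..<Suc (Suc (deg t))]"
  note h2 = H2[OF assms, folded ps_def]
  from h2 False have cuts: "is_cuts (deg v) (map C ps)" by simp
  from h2 False have pl: "is_place t (length (map C ps)) ps" by (auto simp: is_place_def)
  from h2 False have key: "\<forall>p \<le> Suc (deg t). (0 # map C ps) ! length (filter (\<lambda>x. x \<le> p) ps) = C p" by simp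
  have "hash_prod t v (map C ps) ps = graft_t (gC C (children v)) 0 t"
  proof -
    have "hash_prod t v (map C ps) ps = graft_t (gC (\<lambda>p. (0 # map C ps) ! length (filter (\<lambda>x. x \<le> p) ps)) (children v)) 0 t"
      using H1[OF cuts pl] by simp
    also have "\<dots> = graft_t (gC C (children v)) 0 t"
      by (rule gC_cong[OF tsize_deg]) (use key in simp)
    finally show ?thesis .
  qed
  then have "graft_t (gC C (children v)) 0 t = hash_prod t v (map C ps) ps \<and> is_cuts (deg v) (map C ps) \<and>
      is_place t (length (map C ps)) ps" using cuts pl by simp
  then have "graft_t (gC C (children v)) 0 t \<in> {hash_prod t v ns ps |ns ps. is_cuts (deg v) ns \<and> is_place t (length ns) ps}"
    by blast
  then show ?thesis using False unfolding hashes_def by simp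
qed

lemma hashes_out: assumes "w \<in> hashes t v"
  shows "\<exists>C. validC (deg t) (deg v) C \<and> w = graft_t (gC C (children v)) 0 t"
proof (cases "deg v = 0")
  case True
  then have "w = t" using assms by (simp add: hashes_def)
  moreover have "graft_t (gC (\<lambda>_. 0) (children v)) 0 t = t"
    by (rule graft_empty) (simp add: gC_def)
  moreover have "validC (deg t) (deg v) (\<lambda>_. 0)" using True by (simp add: validC_def)
  ultimately show ?thesis by metis
next
  case False
  then obtain ns ps where "w = hash_prod t v ns ps" "is_cuts (deg v) ns" "is_place t (length ns) ps"
    using assms by (auto simp: hashes_def)
  then show ?thesis using H1 by blast
qed


lemma find_i: assumes "validC m n C" shows "q \<le> m \<Longrightarrow> k \<le> q + C (Suc q) \<Longrightarrow>
   \<exists>i\<le>q. i + C i \<le> k \<and> k \<le> i + C (Suc i)"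
proof (induction q)
  case 0 then show ?case using assms by (auto simp: validC_def)
next
  case (Suc q)
  show ?case
  proof (cases "k \<le> q + C (Suc q)")
    case True
    have "q \<le> m" using Suc.prems by simp
    then obtain i where "i \<le> q" "i + C i \<le> k \<and> k \<le> i + C (Suc i)" using Suc.IH True by blast
    then show ?thesis by (intro exI[of _ i]) auto
  next
    case False then show ?thesis using Suc.prems by (intro exI[of _ "Suc q"]) auto
  qed
qed

lemma tint_pre: "i \<le> fsz U \<Longrightarrow> tint (Node U) 1 i = Node (pre_f i U)"
  using tint_eq[of 1 i "Node U"] by simp

lemma tint_suf: "i \<le> fsz U \<Longrightarrow> tint (Node U) (i + 1) (fsz U) = Node (suf_f i U)"
  using tint_eq[of "i + 1" "fsz U" "Node U"] by (simp add: pre_all)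

theorem lemma3p6:
  fixes u v :: tree
  defines "m \<equiv> deg u" and "n \<equiv> deg v"
  shows "(\<forall>w \<in> hashes u v. \<forall>k \<le> m + n. \<exists>i \<le> m. \<exists>j \<le> n.
            \<exists>w1 \<in> hashes (tint u 1 i) (tint v 1 j).
            \<exists>w2 \<in> hashes (tint u (i+1) m) (tint v (j+1) n).
              (tint w 1 k, tint w (k+1) (m+n)) = (w1, w2))
       \<and> (\<forall>i \<le> m. \<forall>j \<le> n.
            \<forall>w1 \<in> hashes (tint u 1 i) (tint v 1 j).
            \<forall>w2 \<in> hashes (tint u (i+1) m) (tint v (j+1) n).
            \<exists>w \<in> hashes u v. (w1, w2) = (tint w 1 (i+j), tint w (i+j+1) (m+n)))"
proof -
  obtain U where u: "u = Node U" by (cases u)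
  obtain V where v: "v = Node V" by (cases v)
  have mU: "m = fsz U" and nV: "n = fsz V" using u v by (simp_all add: m_def n_def)
  have P1: "\<forall>w \<in> hashes u v. \<forall>k \<le> m + n. \<exists>i \<le> m. \<exists>j \<le> n.
            \<exists>w1 \<in> hashes (tint u 1 i) (tint v 1 j).
            \<exists>w2 \<in> hashes (tint u (i+1) m) (tint v (j+1) n).
              (tint w 1 k, tint w (k+1) (m+n)) = (w1, w2)"
  proof (intro ballI allI impI)
    fix w k assume w: "w \<in> hashes u v" and k: "k \<le> m + n"
    obtain C where val: "validC m n C" and wC: "w = graft_t (gC C V) 0 (Node U)"
      using hashes_out[OF w] u v by (auto simp: m_def n_def)
    obtain i where i: "i \<le> m" "i + C i \<le> k" "k \<le> i + C (Suc i)"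
      using find_i[OF val, of m k] k val by (auto simp: validC_def)
    define s where "s = k - i - C i"
    define j where "j = C i + s"
    have s: "s \<le> C (Suc i) - C i" using i by (simp add: s_def)
    have ij: "i + j = k" using i by (simp add: s_def j_def)
    have CSi: "C (Suc i) \<le> n" using valid_le[OF val, of "Suc i"] i by simp
    have jn: "j \<le> n" using i CSi by (simp add: j_def s_def)
    have Ci: "C i \<le> j" by (simp add: j_def)
    note K = KL[OF val mU[symmetric] nV[symmetric] i(1) s j_def wC]
    define C1 where "C1 = (\<lambda>p. if p \<le> i then C p else j)"
    define C2 where "C2 = (\<lambda>p. if p = 0 then 0 else C (p + i) - j)"
    have v1: "validC i j C1"
    proof -
      have "\<forall>p\<le>i. C1 p \<le> C1 (Suc p)"
      proof (intro allI impI)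
        fix p assume p: "p \<le> i"
        show "C1 p \<le> C1 (Suc p)"
        proof (cases "p = i")
          case True then show ?thesis using Ci by (simp add: C1_def)
        next
          case False
          then have "C p \<le> C (Suc p)" using val p i(1) by (simp add: validC_def)
          then show ?thesis using False p by (simp add: C1_def)
        qed
      qed
      then show ?thesis using val by (simp add: validC_def C1_def)
    qed
    have v2: "validC (m - i) (n - j) C2"
    proof -
      have "C (Suc (m - i) + i) = n" using val i by (simp add: validC_def)
      moreover have "\<forall>p\<le>m - i. C2 p \<le> C2 (Suc p)"
      proof (intro allI impI)
        fix p assume "p \<le> m - i"
        then have "C (p + i) \<le> C (Suc p + i)" using valid_mono[OF val, of "p + i" "Suc p + i"] i by simp
        then show "C2 p \<le> C2 (Suc p)" by (simp add: C2_def diff_le_mono)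
      qed
      ultimately show ?thesis by (simp add: validC_def C2_def)
    qed
    have t1: "tint u 1 i = Node (pre_f i U)" using tint_pre i u mU by simp
    have t2: "tint v 1 j = Node (pre_f j V)" using tint_pre jn v nV by simp
    have t3: "tint u (i + 1) m = Node (suf_f i U)" using tint_suf i u mU by simp
    have t4: "tint v (j + 1) n = Node (suf_f j V)" using tint_suf jn v nV by simp
    have m1: "tint w 1 k \<in> hashes (tint u 1 i) (tint v 1 j)"
      using K(1) hashes_in[of "Node (pre_f i U)" "Node (pre_f j V)" C1] v1 i jn mU nV
      unfolding t1 t2 ij C1_def by (simp add: fsz_pre)
    have m2: "tint w (k + 1) (m + n) \<in> hashes (tint u (i + 1) m) (tint v (j + 1) n)"
      using K(2) hashes_in[of "Node (suf_f i U)" "Node (suf_f j V)" C2] v2 i jn mU nV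
      unfolding t3 t4 ij C2_def by (simp add: fsz_suf)
    show "\<exists>i \<le> m. \<exists>j \<le> n.
            \<exists>w1 \<in> hashes (tint u 1 i) (tint v 1 j).
            \<exists>w2 \<in> hashes (tint u (i+1) m) (tint v (j+1) n).
              (tint w 1 k, tint w (k+1) (m+n)) = (w1, w2)"
      using m1 m2 i(1) jn by blast
  qed
  have P2: "\<forall>i \<le> m. \<forall>j \<le> n.
            \<forall>w1 \<in> hashes (tint u 1 i) (tint v 1 j).
            \<forall>w2 \<in> hashes (tint u (i+1) m) (tint v (j+1) n).
            \<exists>w \<in> hashes u v. (w1, w2) = (tint w 1 (i+j), tint w (i+j+1) (m+n))"
  proof (intro allI impI ballI)
    fix i j w1 w2 assume i: "i \<le> m" and jn: "j \<le> n"
      and w1: "w1 \<in> hashes (tint u 1 i) (tint v 1 j)"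
      and w2: "w2 \<in> hashes (tint u (i + 1) m) (tint v (j + 1) n)"
    have t1: "tint u 1 i = Node (pre_f i U)" using tint_pre i u mU by simp
    have t2: "tint v 1 j = Node (pre_f j V)" using tint_pre jn v nV by simp
    have t3: "tint u (i + 1) m = Node (suf_f i U)" using tint_suf i u mU by simp
    have t4: "tint v (j + 1) n = Node (suf_f j V)" using tint_suf jn v nV by simp
    obtain C1 where v1: "validC i j C1" and w1C: "w1 = graft_t (gC C1 (pre_f j V)) 0 (Node (pre_f i U))"
      using hashes_out[OF w1[unfolded t1 t2]] i jn mU nV by (auto simp: fsz_pre)
    obtain C2 where v2: "validC (m - i) (n - j) C2" and w2C: "w2 = graft_t (gC C2 (suf_f j V)) 0 (Node (suf_f i U))"
      using hashes_out[OF w2[unfolded t3 t4]] i jn mU nV by (auto simp: fsz_suf)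
    define C where "C = (\<lambda>p. if p \<le> i then C1 p else j + C2 (p - i))"
    have C1i: "C1 i \<le> j" using valid_le[OF v1, of i] by simp
    have val: "validC m n C"
    proof -
      have a: "C 0 = 0" using v1 by (simp add: C_def validC_def)
      have b: "C (Suc m) = n" using v2 i jn by (simp add: C_def validC_def Suc_diff_le)
      have c: "\<forall>p\<le>m. C p \<le> C (Suc p)"
      proof (intro allI impI)
        fix p assume p: "p \<le> m"
        consider "p < i" | "p = i" | "p > i" by linarith
        then show "C p \<le> C (Suc p)"
        proof cases
          case 1 then show ?thesis using v1 by (simp add: C_def validC_def)
        next
          case 2 then show ?thesis using C1i by (simp add: C_def)
        next
          case 3
          then have "C2 (p - i) \<le> C2 (Suc (p - i))" using v2 p by (simp add: validC_def)
          then show ?thesis using 3 by (simp add: C_def Suc_diff_le)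
        qed
      qed
      show ?thesis using a b c by (simp add: validC_def)
    qed
    define w where "w = graft_t (gC C V) 0 (Node U)"
    have wh: "w \<in> hashes u v" using hashes_in[of u v C] val u v mU nV by (simp add: w_def m_def n_def)
    define s where "s = j - C i"
    have Ci: "C i = C1 i" by (simp add: C_def)
    have s: "s \<le> C (Suc i) - C i" using Ci C1i by (simp add: s_def C_def)
    have js: "j = C i + s" using Ci C1i by (simp add: s_def)
    note K = KL[OF val mU[symmetric] nV[symmetric] i s js w_def]
    have e1: "tint w 1 (i + j) = w1"
    proof -
      have "graft_t (gC (\<lambda>p. if p \<le> i then C p else j) (pre_f j V)) 0 (Node (pre_f i U)) = w1"
        unfolding w1C
        by (rule gC_cong[of _ i]) (use i mU v1 in \<open>auto simp: fsz_pre C_def validC_def le_Suc_eq\<close>)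
      then show ?thesis using K(1) by simp
    qed
    have e2: "tint w (i + j + 1) (m + n) = w2"
    proof -
      have "graft_t (gC (\<lambda>p. if p = 0 then 0 else C (p + i) - j) (suf_f j V)) 0 (Node (suf_f i U)) = w2"
        unfolding w2C
        by (rule gC_cong[of _ "m - i"]) (use i mU v2 in \<open>auto simp: fsz_suf C_def validC_def\<close>)
      then show ?thesis using K(2) by simp
    qed
    show "\<exists>w \<in> hashes u v. (w1, w2) = (tint w 1 (i+j), tint w (i+j+1) (m+n))"
      using wh e1 e2 by auto
  qed
  show ?thesis using P1 P2 by blast
qed

end
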